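(* Let $(\mathcal N,\mathcal E)$ be a fixed connected undirected graph on $\mathcal N=\{1,\dots,n\}$ and $W$ a symmetric stochastic matrix with $w_{ij}=0$ for $i\ne j$, $(i,j)\notin\mathcal E$, $w_{ii}>1/2$ for all $i$, and $w_{ij}$ rational in $(0,1)$ for $(i,j)\in\mathcal E$. For each $i$ let $x_i(1),x_i(2),\dots$ be i.i.d. samples of $X_i$ with $|X_i|\le K$, $\bar x_i=E[X_i]$, $z_i(t)=\frac1t\sum_{\tau\le t}x_i(\tau)$. Fix $\Delta>0$, let $\mathcal B=\{k\Delta+\Delta/2:k=0,1,\dots\}$, let $\mathcal R(x)$ be the multiple $k\Delta$ ($k=0,1,\dots$) nearest to $x$ with $\mathcal R(k\Delta+\Delta/2)=(k+1)\Delta$, $\tilde z_i(t)=\mathcal R(z_i(t))$, $\Delta\tilde z(t+1)=\tilde z(t+1)-\tilde z(t)$. Let $\mathcal Q$ be the element-wise truncation, ceiling, or rounding-to-integer quantizer and let $$y(t+1)=W\mathcal Q(y(t))+y(t)-\mathcal Q(y(t))+\Delta\tilde z(t+1),\qquad t=1,2,\dots.$$ If $\bar x_i\notin\mathcal B$ for all $i$, then almost surely there is a finite set containing $y_i(t)$ for all $t\in\{1,2,\dots\}$ and all $i\in\mathcal N$. *)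

theory Defs
  imports "HOL-Probability.Probability"
begin

datatype quantizer = Truncation | Ceiling | Rounding

fun quant :: "quantizer \<Rightarrow> real \<Rightarrow> real" where
  "quant Truncation x = of_int \<lfloor>x\<rfloor>"
| "quant Ceiling x = of_int \<lceil>x\<rceil>"
| "quant Rounding x = of_int \<lfloor>x + 1/2\<rfloor>"

definition roundDelta :: "real \<Rightarrow> real \<Rightarrow> real" where
  "roundDelta \<Delta> x = \<Delta> * of_int (max 0 \<lfloor>x / \<Delta> + 1/2\<rfloor>)"

definition boundary_set :: "real \<Rightarrow> real set" where
  "boundary_set \<Delta> = {real k * \<Delta> + \<Delta> / 2 | k. True}"

definition connected_graph :: "nat \<Rightarrow> (nat \<times> nat) set \<Rightarrow> bool" where
  "connected_graph n E \<longleftrightarrow> n \<ge> 1 \<and> E \<subseteq> {0..<n} \<times> {0..<n} \<and> sym E \<and> irrefl E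
     \<and> (\<forall>i<n. \<forall>j<n. (i, j) \<in> E\<^sup>*)"

definition sample_mean :: "(nat \<Rightarrow> 'a \<Rightarrow> real) \<Rightarrow> nat \<Rightarrow> 'a \<Rightarrow> real" where
  "sample_mean xi t \<omega> = (\<Sum>\<tau>\<in>{1..t}. xi \<tau> \<omega>) / real t"

end

theory Submission
  imports Defs
begin


fun qi :: "quantizer \<Rightarrow> real \<Rightarrow> int" where
  "qi Truncation x = \<lfloor>x\<rfloor>"
| "qi Ceiling x = \<lceil>x\<rceil>"
| "qi Rounding x = \<lfloor>x + 1/2\<rfloor>"

lemma quant_qi: "quant q x = of_int (qi q x)"
  by (cases q) auto

lemma qi_shift: "qi q (of_int k + (x - quant q x)) = k"
proof (cases q)
  case Truncation
  then show ?thesis by simp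
next
  case Ceiling
  have "\<lceil>of_int k + (x - of_int \<lceil>x\<rceil>)\<rceil> = k"
    by (rule ceiling_unique) (use ceiling_correct[of x] in auto)
  then show ?thesis using Ceiling by simp
next
  case Rounding
  have "\<lfloor>of_int k + (x - of_int \<lfloor>x + 1/2\<rfloor>) + 1/2\<rfloor> = k + \<lfloor>(x + 1/2) - of_int \<lfloor>x + 1/2\<rfloor>\<rfloor>"
  proof -
    have e: "of_int k + (x - of_int \<lfloor>x + 1/2\<rfloor>) + 1/2 = ((x + 1/2) - of_int \<lfloor>x + 1/2\<rfloor>) + of_int k"
      by simp
    show ?thesis unfolding e by (simp only: floor_add_int[symmetric] floor_diff_of_int)
  qed
  also have "\<dots> = k" by simp
  finally show ?thesis using Rounding by simp
qed

lemma qi_mono: "x \<le> y \<Longrightarrow> qi q x \<le> qi q y"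
  by (cases q) (auto intro: floor_mono ceiling_mono)

lemma frac_bound: "\<bar>x - quant q x\<bar> \<le> 1"
proof (cases q)
  case Truncation
  have "of_int \<lfloor>x\<rfloor> \<le> x" "x < of_int \<lfloor>x\<rfloor> + 1" by simp_all
  moreover have "quant q x = of_int \<lfloor>x\<rfloor>" using Truncation by simp
  ultimately show ?thesis unfolding abs_le_iff by linarith
next
  case Ceiling
  have "quant q x = of_int \<lceil>x\<rceil>" using Ceiling by simp
  then show ?thesis using ceiling_correct[of x] unfolding abs_le_iff by linarith
next
  case Rounding
  have "of_int \<lfloor>x+1/2\<rfloor> \<le> x+1/2" "x+1/2 < of_int \<lfloor>x+1/2\<rfloor> + 1" by simp_all
  moreover have "quant q x = of_int \<lfloor>x+1/2\<rfloor>" using Rounding by simp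
  ultimately show ?thesis unfolding abs_le_iff by linarith
qed

lemma common_denom:
  fixes A :: "real set"
  assumes "finite A" "A \<subseteq> \<rat>"
  shows "\<exists>D::int. D > 0 \<and> (\<forall>r\<in>A. of_int D * r \<in> \<int>)"
  using assms
proof (induction A rule: finite_induct)
  case empty
  then show ?case by (intro exI[of _ 1]) auto
next
  case (insert r A)
  then obtain D where D: "D > 0" "\<forall>s\<in>A. of_int D * s \<in> \<int>" by auto
  from insert have "r \<in> \<rat>" by auto
  then obtain a b where ab: "b > 0" "r = of_int a / of_int b" by (rule Rats_cases')
  show ?case
  proof (intro exI[of _ "D*b"] conjI ballI)
    show "D * b > 0" using D ab by simp
    fix s assume "s \<in> insert r A"
    then show "of_int (D*b) * s \<in> \<int>"
    proof
      assume "s = r"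
      then have "of_int b * s = of_int a" using ab by simp
      have "of_int (D*b) * s = of_int D * (of_int b * s)" by (simp only: of_int_mult mult.assoc)
      then have "of_int (D*b) * s = of_int (D*a)" using \<open>of_int b * s = of_int a\<close> by simp
      then show ?thesis by (metis Ints_of_int)
    next
      assume "s \<in> A"
      then have "of_int D * s \<in> \<int>" using D by auto
      then obtain k where "of_int D * s = of_int k" by (auto elim: Ints_cases)
      moreover have "of_int (D*b) * s = of_int b * (of_int D * s)" by (simp only: of_int_mult mult_ac)
      ultimately have "of_int (D*b) * s = of_int (b*k)" by simp
      then show ?thesis by (metis Ints_of_int)
    qed
  qed
qed

lemma det_bounded:
  fixes Y :: "nat \<Rightarrow> nat \<Rightarrow> real" and W :: "nat \<Rightarrow> nat \<Rightarrow> real"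
  assumes n: "n \<ge> 1"
    and W_nonneg: "\<And>i j. i < n \<Longrightarrow> j < n \<Longrightarrow> W i j \<ge> 0"
    and W_stoch: "\<And>i. i < n \<Longrightarrow> (\<Sum>j<n. W i j) = 1"
    and W_rat: "\<And>i j. i < n \<Longrightarrow> j < n \<Longrightarrow> W i j \<in> \<rat>"
    and T: "T \<ge> 1"
    and rec: "\<And>t i. t \<ge> T \<Longrightarrow> i < n \<Longrightarrow>
       Y (t + 1) i = (\<Sum>j<n. W i j * quant q (Y t j)) + Y t i - quant q (Y t i)"
  shows "\<exists>S. finite S \<and> (\<forall>t\<ge>1. \<forall>i<n. Y t i \<in> S)"
proof -
  define m where "m = Min ((\<lambda>j. qi q (Y T j)) ` {..<n})"
  define Mx where "Mx = Max ((\<lambda>j. qi q (Y T j)) ` {..<n})"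
  have ne: "{..<n} \<noteq> {}" proof - have "(0::nat) \<in> {..<n}" using n by simp then show ?thesis by blast qed
  have bnd: "m \<le> qi q (Y t j) \<and> qi q (Y t j) \<le> Mx" if "t \<ge> T" "j < n" for t j
    using that
  proof (induction t arbitrary: j rule: dec_induct)
    case base
    then show ?case unfolding m_def Mx_def by (intro conjI Min_le Max_ge) auto
  next
    case (step t)
    define c where "c = (\<Sum>k<n. W j k * quant q (Y t k))"
    have "c \<le> (\<Sum>k<n. W j k * of_int Mx)"
      unfolding c_def quant_qi
      by (intro sum_mono mult_left_mono) (use step W_nonneg in auto)
    also have "\<dots> = of_int Mx" using W_stoch[OF step(4)] by (simp add: sum_distrib_right[symmetric])
    finally have c1: "c \<le> of_int Mx" .
    have "(\<Sum>k<n. W j k * of_int m) \<le> c"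
      unfolding c_def quant_qi
      by (intro sum_mono mult_left_mono) (use step W_nonneg in auto)
    moreover have "(\<Sum>k<n. W j k * of_int m) = of_int m" using W_stoch[OF step(4)] by (simp add: sum_distrib_right[symmetric])
    ultimately have c2: "of_int m \<le> c" by simp
    have Y1: "Y (t+1) j = c + (Y t j - quant q (Y t j))"
      using rec[of t j] step by (simp add: c_def)
    have "qi q (Y (t+1) j) \<le> qi q (of_int Mx + (Y t j - quant q (Y t j)))"
      unfolding Y1 by (rule qi_mono) (use c1 in simp)
    moreover have "qi q (of_int m + (Y t j - quant q (Y t j))) \<le> qi q (Y (t+1) j)"
      unfolding Y1 by (rule qi_mono) (use c2 in simp)
    ultimately show ?case unfolding qi_shift by simp
  qed
  define B where "B = real_of_int (\<bar>m\<bar> + \<bar>Mx\<bar>) + 1"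
  have Ybnd: "\<bar>Y t j\<bar> \<le> B" if "t \<ge> T" "j < n" for t j
  proof -
    have "\<bar>Y t j - quant q (Y t j)\<bar> \<le> 1" by (rule frac_bound)
    moreover have "\<bar>quant q (Y t j)\<bar> \<le> real_of_int (\<bar>m\<bar> + \<bar>Mx\<bar>)"
      using bnd[OF that] unfolding quant_qi by linarith
    ultimately show ?thesis unfolding B_def by linarith
  qed
  have Wr: "(\<lambda>(i,j). W i j) ` ({..<n} \<times> {..<n}) \<subseteq> \<rat>" using W_rat by auto
  obtain D :: int where D: "D > 0" "\<forall>r\<in>(\<lambda>(i,j). W i j) ` ({..<n} \<times> {..<n}). of_int D * r \<in> \<int>"
    using common_denom[OF _ Wr] by blast
  have DW: "of_int D * W i j \<in> \<int>" if "i < n" "j < n" for i j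
    using D(2) that by force
  have lat: "of_int D * (Y t i - Y T i) \<in> \<int>" if "t \<ge> T" "i < n" for t i
    using that
  proof (induction t rule: dec_induct)
    case base
    then show ?case by simp
  next
    case (step t)
    have eq: "of_int D * (Y (t+1) i - Y T i) = (\<Sum>j<n. (of_int D * W i j) * quant q (Y t j))
        - of_int D * quant q (Y t i) + of_int D * (Y t i - Y T i)"
      using rec[of t i] step by (simp add: sum_distrib_left mult.assoc right_diff_distrib distrib_left)
    have A: "(\<Sum>j<n. (of_int D * W i j) * quant q (Y t j)) \<in> \<int>"
      unfolding quant_qi
    proof (rule Ints_sum)
      fix j assume "j \<in> {..<n}"
      then show "of_int D * W i j * real_of_int (qi q (Y t j)) \<in> \<int>"
        using step DW by (intro Ints_mult[OF DW]) auto
    qed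
    have B: "of_int D * quant q (Y t i) \<in> \<int>" unfolding quant_qi by simp
    have C: "of_int D * (Y t i - Y T i) \<in> \<int>" using step by auto
    show ?case unfolding Suc_eq_plus1 eq by (rule Ints_add[OF Ints_diff[OF A B] C])
  qed
  define N :: int where "N = \<lceil>2 * B * of_int D\<rceil>"
  define S1 where "S1 = (\<Union>i<n. (\<lambda>k. Y T i + of_int k / of_int D) ` {-N..N})"
  define S0 where "S0 = (\<lambda>(t,i). Y t i) ` ({..T} \<times> {..<n})"
  show ?thesis
  proof (intro exI[of _ "S0 \<union> S1"] conjI allI impI)
    show "finite (S0 \<union> S1)" unfolding S0_def S1_def by auto
    fix t i :: nat assume t: "1 \<le> t" and i: "i < n"
    show "Y t i \<in> S0 \<union> S1"
    proof (cases "t \<le> T")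
      case True
      then show ?thesis unfolding S0_def using i by force
    next
      case False
      then have tT: "t \<ge> T" by simp
      obtain k where k: "of_int D * (Y t i - Y T i) = of_int k"
        using lat[OF tT i] by (auto elim: Ints_cases)
      have "\<bar>Y t i - Y T i\<bar> \<le> 2 * B" using Ybnd[OF tT i] Ybnd[OF order.refl i] by linarith
      then have "\<bar>of_int D * (Y t i - Y T i)\<bar> \<le> of_int D * (2 * B)"
        using D(1) by (simp add: abs_mult)
      then have "\<bar>real_of_int k\<bar> \<le> 2 * B * of_int D" using k by (simp add: mult.commute)
      then have kN: "k \<in> {-N..N}" unfolding N_def by (simp add: abs_le_iff) linarith
      have "Y t i = Y T i + of_int k / of_int D" using k D(1) by (simp add: field_simps)
      then show ?thesis unfolding S1_def using i kN by blast
    qed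
  qed
qed



lemma roundDelta_loc_const:
  assumes D: "\<Delta> > 0" and nb: "\<mu> \<notin> boundary_set \<Delta>"
  shows "\<exists>\<epsilon>>0. \<forall>z. \<bar>z - \<mu>\<bar> < \<epsilon> \<longrightarrow> roundDelta \<Delta> z = roundDelta \<Delta> \<mu>"
proof (cases "\<mu> < \<Delta>/2")
  case True
  have "roundDelta \<Delta> z = 0" if "z < \<Delta>/2" for z
  proof -
    have "z / \<Delta> < 1/2" using that D by (simp add: field_simps)
    then have "\<lfloor>z / \<Delta> + 1/2\<rfloor> \<le> 0" by linarith
    then show ?thesis unfolding roundDelta_def by simp
  qed
  then show ?thesis using True
    by (intro exI[of _ "\<Delta>/2 - \<mu>"]) auto
next
  case False
  define u where "u = \<mu> / \<Delta> + 1/2"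
  have u1: "u \<ge> 1" using False D unfolding u_def by (simp add: field_simps)
  have nint: "u \<noteq> of_int \<lfloor>u\<rfloor>"
  proof
    assume h: "u = of_int \<lfloor>u\<rfloor>"
    define k where "k = nat (\<lfloor>u\<rfloor> - 1)"
    have "\<lfloor>u\<rfloor> \<ge> 1" using u1 by linarith
    then have "real k = u - 1" using h unfolding k_def by simp
    then have "\<mu> = real k * \<Delta> + \<Delta> / 2" using D unfolding u_def by (simp add: field_simps)
    then show False using nb unfolding boundary_set_def by auto
  qed
  have lt: "of_int \<lfloor>u\<rfloor> < u" using nint of_int_floor_le[of u] by linarith
  have gt: "u < of_int \<lfloor>u\<rfloor> + 1" by simp
  define \<delta> where "\<delta> = min (u - of_int \<lfloor>u\<rfloor>) (of_int \<lfloor>u\<rfloor> + 1 - u)"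
  have \<delta>: "\<delta> > 0" using lt gt unfolding \<delta>_def by simp
  show ?thesis
  proof (intro exI[of _ "\<Delta> * \<delta>"] conjI allI impI)
    show "\<Delta> * \<delta> > 0" using D \<delta> by simp
    fix z assume z: "\<bar>z - \<mu>\<bar> < \<Delta> * \<delta>"
    have "(z/\<Delta> + 1/2) - u = (z - \<mu>) / \<Delta>" unfolding u_def by (simp add: diff_divide_distrib)
    then have "\<bar>(z/\<Delta> + 1/2) - u\<bar> = \<bar>z - \<mu>\<bar> / \<Delta>" using D by (simp add: abs_divide)
    also have "\<dots> < \<delta>" using z D by (simp add: field_simps mult.commute)
    finally have "\<bar>(z/\<Delta> + 1/2) - u\<bar> < \<delta>" .
    then have "of_int \<lfloor>u\<rfloor> \<le> z/\<Delta> + 1/2" "z/\<Delta> + 1/2 < of_int \<lfloor>u\<rfloor> + 1"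
      unfolding \<delta>_def by (auto simp: abs_less_iff)
    then have "\<lfloor>z/\<Delta> + 1/2\<rfloor> = \<lfloor>u\<rfloor>" by (intro floor_unique) auto
    then show "roundDelta \<Delta> z = roundDelta \<Delta> \<mu>" unfolding roundDelta_def u_def by simp
  qed
qed

lemma sample_mean_measurable:
  assumes "\<And>t. t \<ge> 1 \<Longrightarrow> X t \<in> borel_measurable M"
  shows "sample_mean X t \<in> borel_measurable M"
proof -
  have "(\<lambda>\<omega>. \<Sum>\<tau>\<in>{1..t}. X \<tau> \<omega>) \<in> borel_measurable M"
    by (rule borel_measurable_sum) (use assms in auto)
  then have "(\<lambda>\<omega>. (\<Sum>\<tau>\<in>{1..t}. X \<tau> \<omega>) / real t) \<in> borel_measurable M"
    by (rule borel_measurable_divide) simp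
  then show ?thesis unfolding sample_mean_def[abs_def] by simp
qed

lemma (in prob_space) hoeffding_ae:
  fixes X :: "nat \<Rightarrow> 'a \<Rightarrow> real"
  assumes meas: "\<And>t. t \<ge> 1 \<Longrightarrow> X t \<in> borel_measurable M"
    and indep: "indep_vars (\<lambda>_. borel) X {1..}"
    and ident: "\<And>t. t \<ge> 1 \<Longrightarrow> distr M borel (X t) = distr M borel (X 1)"
    and bnd: "\<And>t \<omega>. t \<ge> 1 \<Longrightarrow> \<omega> \<in> space M \<Longrightarrow> \<bar>X t \<omega>\<bar> \<le> K"
    and eps: "\<epsilon> > 0"
  shows "AE \<omega> in M. eventually (\<lambda>t. \<bar>sample_mean X t \<omega> - expectation (X 1)\<bar> < \<epsilon>) sequentially"
proof -
  define a where "a = -(\<bar>K\<bar> + 1)"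
  define b where "b = \<bar>K\<bar> + 1"
  have ab: "a < b" unfolding a_def b_def by simp
  define c where "c = 2 * \<epsilon>\<^sup>2 / (b - a)\<^sup>2"
  have c: "c > 0" using eps ab unfolding c_def by simp
  define A where "A m = {\<omega> \<in> space M. \<epsilon> \<le> \<bar>sample_mean X (Suc m) \<omega> - expectation (X 1)\<bar>}" for m
  have Ameas: "A m \<in> sets M" for m
  proof -
    have [measurable]: "sample_mean X (Suc m) \<in> borel_measurable M"
      by (rule sample_mean_measurable) (rule meas)
    have "(\<lambda>\<omega>. \<bar>sample_mean X (Suc m) \<omega> - expectation (X 1)\<bar>) \<in> borel_measurable M"
      by (intro borel_measurable_abs borel_measurable_diff borel_measurable_const) fact
    then show ?thesis unfolding A_def by (rule borel_measurable_le[OF borel_measurable_const])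
  qed
  have Abound: "prob (A m) \<le> 2 * exp (- c) ^ Suc m" for m
  proof -
    have HI: "Hoeffding_ineq_iid M {1..Suc m} X (X 1) a b"
    proof (intro Hoeffding_ineq_iid.intro iid_interval_bounded_random_variables.intro
        iid_interval_bounded_random_variables_axioms.intro prob_space_axioms)
      show "finite {1..Suc m}" by simp
      show "indep_vars (\<lambda>_. borel) X {1..Suc m}"
        by (rule indep_vars_subset[OF indep]) auto
      show "distr M borel (X i) = distr M borel (X 1)" if "i \<in> {1..Suc m}" for i
        using that by (intro ident) auto
      show "random_variable borel (X 1)" using meas by simp
      show "AE x in M. X 1 x \<in> {a..b}"
      proof (rule AE_I2)
        fix \<omega> assume "\<omega> \<in> space M"
        then have "\<bar>X 1 \<omega>\<bar> \<le> K" using bnd[of 1 \<omega>] by simp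
        then show "X 1 \<omega> \<in> {a..b}" unfolding a_def b_def atLeastAtMost_iff abs_le_iff by linarith
      qed
    qed
    have e1: "-2 * real (card {1..Suc m}) * \<epsilon>\<^sup>2 / (b - a)\<^sup>2 = real (Suc m) * (- c)"
      using ab unfolding c_def by (simp add: field_simps)
    have e2: "exp (real (Suc m) * (- c)) = exp (- c) ^ Suc m" by (rule exp_of_nat_mult)
    have "prob {x\<in>space M. \<bar>(\<Sum>i\<in>{1..Suc m}. X i x) / real (card {1..Suc m}) - expectation (X 1)\<bar> \<ge> \<epsilon>}
        \<le> 2 * exp (-2 * real (card {1..Suc m}) * \<epsilon>\<^sup>2 / (b - a)\<^sup>2)"
      by (rule Hoeffding_ineq_iid.Hoeffding_ineq_abs_ge'[OF HI]) (use eps ab in auto)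
    then have "prob {x\<in>space M. \<bar>(\<Sum>i\<in>{1..Suc m}. X i x) / real (card {1..Suc m}) - expectation (X 1)\<bar> \<ge> \<epsilon>}
        \<le> 2 * exp (- c) ^ Suc m" unfolding e1 e2 .
    moreover have "real (card {1..Suc m}) = real (Suc m)" by simp
    ultimately show ?thesis unfolding A_def sample_mean_def by simp
  qed
  have summ: "summable (\<lambda>m. measure M (A m))"
  proof (rule summable_comparison_test')
    have "summable (\<lambda>m. (2 * exp (- c)) * exp (- c) ^ m)"
      using c by (intro summable_mult summable_geometric) simp
    then show "summable (\<lambda>m. 2 * exp (- c) ^ Suc m)" by (simp add: mult.assoc)
    show "norm (measure M (A m)) \<le> 2 * exp (- c) ^ Suc m" for m
      using Abound[of m] by simp
  qed
  have "AE \<omega> in M. eventually (\<lambda>m. \<omega> \<in> space M - A m) sequentially"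
    by (rule borel_cantelli_AE1[OF Ameas _ summ]) (simp add: less_top[symmetric])
  then show ?thesis
  proof (rule eventually_mono)
    fix \<omega> assume "eventually (\<lambda>m. \<omega> \<in> space M - A m) sequentially"
    then have "eventually (\<lambda>m. \<bar>sample_mean X (Suc m) \<omega> - expectation (X 1)\<bar> < \<epsilon>) sequentially"
      by (rule eventually_mono) (auto simp: A_def)
    then show "eventually (\<lambda>t. \<bar>sample_mean X t \<omega> - expectation (X 1)\<bar> < \<epsilon>) sequentially"
      by (rule iffD1[OF eventually_sequentially_Suc])
  qed
qed

theorem lemma3:
  fixes n :: nat and E :: "(nat \<times> nat) set" and W :: "nat \<Rightarrow> nat \<Rightarrow> real"
    and M :: "'a measure" and x :: "nat \<Rightarrow> nat \<Rightarrow> 'a \<Rightarrow> real"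
    and K \<Delta> :: real and q :: quantizer and y :: "'a \<Rightarrow> nat \<Rightarrow> nat \<Rightarrow> real"
  assumes graph: "connected_graph n E"
    and W_nonneg: "\<And>i j. i < n \<Longrightarrow> j < n \<Longrightarrow> W i j \<ge> 0"
    and W_sym: "\<And>i j. i < n \<Longrightarrow> j < n \<Longrightarrow> W i j = W j i"
    and W_stoch: "\<And>i. i < n \<Longrightarrow> (\<Sum>j<n. W i j) = 1"
    and W_zero: "\<And>i j. i < n \<Longrightarrow> j < n \<Longrightarrow> i \<noteq> j \<Longrightarrow> (i, j) \<notin> E \<Longrightarrow> W i j = 0"
    and W_diag: "\<And>i. i < n \<Longrightarrow> W i i > 1/2"
    and W_edge: "\<And>i j. (i, j) \<in> E \<Longrightarrow> W i j \<in> \<rat> \<and> 0 < W i j \<and> W i j < 1"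
    and P: "prob_space M"
    and meas: "\<And>i t. i < n \<Longrightarrow> t \<ge> 1 \<Longrightarrow> x i t \<in> borel_measurable M"
    and indep: "\<And>i. i < n \<Longrightarrow> prob_space.indep_vars M (\<lambda>_. borel) (x i) {1..}"
    and ident: "\<And>i t. i < n \<Longrightarrow> t \<ge> 1 \<Longrightarrow> distr M borel (x i t) = distr M borel (x i 1)"
    and bounded: "\<And>i t \<omega>. i < n \<Longrightarrow> t \<ge> 1 \<Longrightarrow> \<omega> \<in> space M \<Longrightarrow> \<bar>x i t \<omega>\<bar> \<le> K"
    and Delta_pos: "\<Delta> > 0"
    and not_boundary: "\<And>i. i < n \<Longrightarrow> (\<integral>\<omega>. x i 1 \<omega> \<partial>M) \<notin> boundary_set \<Delta>"
    and y_rec: "\<And>\<omega> t i. t \<ge> 1 \<Longrightarrow> i < n \<Longrightarrow>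
       y \<omega> (t + 1) i =
         (\<Sum>j<n. W i j * quant q (y \<omega> t j)) + y \<omega> t i - quant q (y \<omega> t i)
         + (roundDelta \<Delta> (sample_mean (x i) (t + 1) \<omega>) - roundDelta \<Delta> (sample_mean (x i) t \<omega>))"
  shows "AE \<omega> in M. \<exists>S. finite S \<and> (\<forall>t\<ge>1. \<forall>i<n. y \<omega> t i \<in> S)"
proof -
  interpret prob_space M by (rule P)
  have n1: "n \<ge> 1" using graph unfolding connected_graph_def by simp
  have W_rat: "W i j \<in> \<rat>" if "i < n" "j < n" for i j
  proof (cases "i = j")
    case False
    then show ?thesis using W_edge W_zero that by (cases "(i, j) \<in> E") auto
  next
    case True
    have off: "W i k \<in> \<rat>" if "k \<in> {..<n} - {i}" for k
      using W_edge W_zero that \<open>i < n\<close> by (cases "(i, k) \<in> E") auto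
    have "(\<Sum>k<n. W i k) = W i i + (\<Sum>k\<in>{..<n} - {i}. W i k)"
      using \<open>i < n\<close> by (simp add: sum.remove)
    then have "W i i = 1 - (\<Sum>k\<in>{..<n} - {i}. W i k)" using W_stoch[OF \<open>i < n\<close>] by simp
    also have "\<dots> \<in> \<rat>" using off by (intro Rats_diff Rats_sum) auto
    finally show ?thesis using True by simp
  qed
  have ev: "AE \<omega> in M. eventually (\<lambda>t. roundDelta \<Delta> (sample_mean (x i) t \<omega>) = roundDelta \<Delta> (expectation (x i 1))) sequentially"
    if i: "i < n" for i
  proof -
    obtain \<epsilon> where \<epsilon>: "\<epsilon> > 0" "\<And>z. \<bar>z - expectation (x i 1)\<bar> < \<epsilon> \<Longrightarrow> roundDelta \<Delta> z = roundDelta \<Delta> (expectation (x i 1))"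
      using roundDelta_loc_const[OF Delta_pos not_boundary[OF i]] by blast
    have "AE \<omega> in M. eventually (\<lambda>t. \<bar>sample_mean (x i) t \<omega> - expectation (x i 1)\<bar> < \<epsilon>) sequentially"
      by (rule hoeffding_ae[OF meas[OF i] indep[OF i] ident[OF i] bounded[OF i] \<epsilon>(1)])
    then show ?thesis
    proof (rule eventually_mono)
      fix \<omega> assume "eventually (\<lambda>t. \<bar>sample_mean (x i) t \<omega> - expectation (x i 1)\<bar> < \<epsilon>) sequentially"
      then show "eventually (\<lambda>t. roundDelta \<Delta> (sample_mean (x i) t \<omega>) = roundDelta \<Delta> (expectation (x i 1))) sequentially"
        by (rule eventually_mono) (rule \<epsilon>(2))
    qed
  qed
  have "AE \<omega> in M. \<forall>i\<in>{..<n}. eventually (\<lambda>t. roundDelta \<Delta> (sample_mean (x i) t \<omega>) = roundDelta \<Delta> (expectation (x i 1))) sequentially"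
    by (rule AE_finite_allI) (use ev in auto)
  then show ?thesis
  proof (rule eventually_mono)
    fix \<omega>
    assume "\<forall>i\<in>{..<n}. eventually (\<lambda>t. roundDelta \<Delta> (sample_mean (x i) t \<omega>) = roundDelta \<Delta> (expectation (x i 1))) sequentially"
    then have "eventually (\<lambda>t. \<forall>i\<in>{..<n}. roundDelta \<Delta> (sample_mean (x i) t \<omega>) = roundDelta \<Delta> (expectation (x i 1))) sequentially"
      by (rule eventually_ball_finite[rotated]) simp
    then obtain N where N: "\<And>t i. t \<ge> N \<Longrightarrow> i < n \<Longrightarrow> roundDelta \<Delta> (sample_mean (x i) t \<omega>) = roundDelta \<Delta> (expectation (x i 1))"
      unfolding eventually_sequentially by blast
    show "\<exists>S. finite S \<and> (\<forall>t\<ge>1. \<forall>i<n. y \<omega> t i \<in> S)"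
    proof (rule det_bounded[OF n1 W_nonneg W_stoch W_rat, where T = "N + 1"])
      fix t i assume t: "N + 1 \<le> t" and i: "i < n"
      have "roundDelta \<Delta> (sample_mean (x i) (t + 1) \<omega>) - roundDelta \<Delta> (sample_mean (x i) t \<omega>) = 0"
        using N[of "t+1" i] N[of t i] t i by simp
      then show "y \<omega> (t + 1) i = (\<Sum>j<n. W i j * quant q (y \<omega> t j)) + y \<omega> t i - quant q (y \<omega> t i)"
        using y_rec[of t i \<omega>] t i by simp
    qed auto
  qed
qed



end
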